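(* A magma $(Q,\cdot)$ is a Ward quasigroup if and only if it is cancellative and satisfies $(xz)(yz)=xy$ for all $x,y,z\in Q$.
   Context: A Ward quasigroup is a quasigroup (a magma in which $ax=b$ and $ya=b$ have unique solutions for all $a,b$) satisfying $(xz)(yz)=xy$ for all $x,y,z$. A magma is cancellative if $ax=ay\Rightarrow x=y$ and $xa=ya\Rightarrow x=y$. *)

theory Defs
  imports Main
begin

definition magma :: "'a set \<Rightarrow> ('a \<Rightarrow> 'a \<Rightarrow> 'a) \<Rightarrow> bool" where
  "magma Q m \<longleftrightarrow> (\<forall>x\<in>Q. \<forall>y\<in>Q. m x y \<in> Q)"

definition quasigroup :: "'a set \<Rightarrow> ('a \<Rightarrow> 'a \<Rightarrow> 'a) \<Rightarrow> bool" where
  "quasigroup Q m \<longleftrightarrow> magma Q m \<and>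
     (\<forall>a\<in>Q. \<forall>b\<in>Q. (\<exists>!x. x \<in> Q \<and> m a x = b) \<and> (\<exists>!y. y \<in> Q \<and> m y a = b))"

definition ward_identity :: "'a set \<Rightarrow> ('a \<Rightarrow> 'a \<Rightarrow> 'a) \<Rightarrow> bool" where
  "ward_identity Q m \<longleftrightarrow> (\<forall>x\<in>Q. \<forall>y\<in>Q. \<forall>z\<in>Q. m (m x z) (m y z) = m x y)"

definition ward_quasigroup :: "'a set \<Rightarrow> ('a \<Rightarrow> 'a \<Rightarrow> 'a) \<Rightarrow> bool" where
  "ward_quasigroup Q m \<longleftrightarrow> quasigroup Q m \<and> ward_identity Q m"

definition cancellative :: "'a set \<Rightarrow> ('a \<Rightarrow> 'a \<Rightarrow> 'a) \<Rightarrow> bool" where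
  "cancellative Q m \<longleftrightarrow> (\<forall>a\<in>Q. \<forall>x\<in>Q. \<forall>y\<in>Q.
     (m a x = m a y \<longrightarrow> x = y) \<and> (m x a = m y a \<longrightarrow> x = y))"

end

theory Submission
  imports Defs
begin

lemma ward_aux:
  fixes Q :: "'a set" and m :: "'a \<Rightarrow> 'a \<Rightarrow> 'a"
  assumes mg: "\<And>x y. x \<in> Q \<Longrightarrow> y \<in> Q \<Longrightarrow> m x y \<in> Q"
  and w: "\<And>x y z. x \<in> Q \<Longrightarrow> y \<in> Q \<Longrightarrow> z \<in> Q \<Longrightarrow> m (m x z) (m y z) = m x y"
  and cl: "\<And>a x y. a \<in> Q \<Longrightarrow> x \<in> Q \<Longrightarrow> y \<in> Q \<Longrightarrow> m a x = m a y \<Longrightarrow> x = y"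
  and cr: "\<And>a x y. a \<in> Q \<Longrightarrow> x \<in> Q \<Longrightarrow> y \<in> Q \<Longrightarrow> m x a = m y a \<Longrightarrow> x = y"
  and a: "a \<in> Q" and b: "b \<in> Q"
  shows "(\<exists>x. x \<in> Q \<and> m a x = b) \<and> (\<exists>y. y \<in> Q \<and> m y a = b)"
proof -
  define e where "e = m a a"
  have eQ: "e \<in> Q" using mg a e_def by simp
  have sq: "m x x = e" if "x \<in> Q" for x
    unfolding e_def by (metis (no_types, lifting) that a cl mg w)
  have re: "m x e = x" if "x \<in> Q" for x
  proof -
    have "m x (m x x) = x" by (metis (no_types, lifting) that cl mg w)
    thus ?thesis using sq[OF that] by simp
  qed
  have ee: "m e (m e x) = x" if "x \<in> Q" for x
    by (metis that re sq mg w)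
  have sw: "m e (m u v) = m v u" if "u \<in> Q" "v \<in> Q" for u v
  proof -
    have "m (m u u) (m v u) = m u v" using w[of u v u] that by simp
    hence "m e (m v u) = m u v" using sq that by simp
    hence "m e (m e (m v u)) = m e (m u v)" by simp
    thus ?thesis using ee mg that by simp
  qed
  have s1: "m (m b (m e a)) a = b"
  proof -
    have "m (m b (m e a)) (m e (m e a)) = m b e" using w[of b e "m e a"] b eQ mg a by simp
    thus ?thesis using ee[OF a] re[OF b] by simp
  qed
  define x where "x = m (m e b) (m e a)"
  have xQ: "x \<in> Q" using x_def mg eQ a b by simp
  have "m x a = m e b"
  proof -
    have "m x (m e (m e a)) = m (m e b) e" unfolding x_def using w[of "m e b" e "m e a"] b eQ mg a by simp
    thus ?thesis using ee[OF a] re mg eQ b by simp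
  qed
  hence "m e (m a x) = m e b" using sw[OF a xQ] by simp
  hence "m e (m e (m a x)) = m e (m e b)" by simp
  hence "m a x = b" using ee[OF b] ee[OF mg[OF a xQ]] by simp
  have yQ: "m b (m e a) \<in> Q" using mg[OF b mg[OF eQ a]] .
  show ?thesis using xQ \<open>m a x = b\<close> yQ s1 by blast
qed

theorem lemma6p4:
  fixes Q :: "'a set" and m :: "'a \<Rightarrow> 'a \<Rightarrow> 'a"
  assumes "magma Q m"
  shows "ward_quasigroup Q m \<longleftrightarrow> cancellative Q m \<and> ward_identity Q m"
proof
  assume h: "ward_quasigroup Q m"
  hence q: "quasigroup Q m" and wi: "ward_identity Q m" unfolding ward_quasigroup_def by auto
  have "cancellative Q m"
    unfolding cancellative_def
  proof (intro ballI conjI impI)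
    fix a x y assume a: "a \<in> Q" and x: "x \<in> Q" and y: "y \<in> Q"
    have mx: "m a x \<in> Q" using assms a x unfolding magma_def by blast
    have mx2: "m x a \<in> Q" using assms a x unfolding magma_def by blast
    have qq: "\<forall>a\<in>Q. \<forall>b\<in>Q. (\<exists>!x. x \<in> Q \<and> m a x = b) \<and> (\<exists>!y. y \<in> Q \<and> m y a = b)"
      using q unfolding quasigroup_def by (rule conjunct2)
    have u1: "\<exists>!z. z \<in> Q \<and> m a z = m a x" using qq[rule_format, OF a mx] by (rule conjunct1)
    have u2: "\<exists>!z. z \<in> Q \<and> m z a = m x a" using qq[rule_format, OF a mx2] by (rule conjunct2)
    show "x = y" if "m a x = m a y"
    proof -
      obtain z where z: "\<And>w. w \<in> Q \<and> m a w = m a x \<Longrightarrow> w = z"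
        using u1 unfolding Ex1_def by blast
      have "x = z" using z[of x] x by simp
      moreover have "y = z" using z[of y] y that by simp
      ultimately show ?thesis by simp
    qed
    show "x = y" if "m x a = m y a"
    proof -
      obtain z where z: "\<And>w. w \<in> Q \<and> m w a = m x a \<Longrightarrow> w = z"
        using u2 unfolding Ex1_def by blast
      have "x = z" using z[of x] x by simp
      moreover have "y = z" using z[of y] y that by simp
      ultimately show ?thesis by simp
    qed
  qed
  thus "cancellative Q m \<and> ward_identity Q m" using wi by simp
next
  assume h: "cancellative Q m \<and> ward_identity Q m"
  have mg: "\<And>x y. x \<in> Q \<Longrightarrow> y \<in> Q \<Longrightarrow> m x y \<in> Q"
    using assms[unfolded magma_def, rule_format] by this
  have wi: "ward_identity Q m" using h by (rule conjunct2)
  have ca: "cancellative Q m" using h by (rule conjunct1)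
  have w: "\<And>x y z. x \<in> Q \<Longrightarrow> y \<in> Q \<Longrightarrow> z \<in> Q \<Longrightarrow> m (m x z) (m y z) = m x y"
    using wi[unfolded ward_identity_def, rule_format] by this
  have cc: "\<And>a x y. a \<in> Q \<Longrightarrow> x \<in> Q \<Longrightarrow> y \<in> Q \<Longrightarrow>
     (m a x = m a y \<longrightarrow> x = y) \<and> (m x a = m y a \<longrightarrow> x = y)"
    using ca[unfolded cancellative_def, rule_format] by this
  note cl = cc[THEN conjunct1, rule_format]
  note cr = cc[THEN conjunct2, rule_format]
  have "quasigroup Q m"
    unfolding quasigroup_def
  proof (intro conjI ballI assms)
    fix a b assume a: "a \<in> Q" and b: "b \<in> Q"
    note ex = ward_aux[where Q=Q and m=m and a=a and b=b, OF mg w cl cr a b]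
    obtain x where x: "x \<in> Q \<and> m a x = b" using ex[THEN conjunct1] by (rule exE)
    obtain y where y: "y \<in> Q \<and> m y a = b" using ex[THEN conjunct2] by (rule exE)
    show "\<exists>!x. x \<in> Q \<and> m a x = b"
    proof (rule ex1I[of _ x])
      show "x \<in> Q \<and> m a x = b" using x by this
      fix z assume "z \<in> Q \<and> m a z = b"
      thus "z = x" using cl[OF a, of z x] x by auto
    qed
    show "\<exists>!y. y \<in> Q \<and> m y a = b"
    proof (rule ex1I[of _ y])
      show "y \<in> Q \<and> m y a = b" using y by this
      fix z assume "z \<in> Q \<and> m z a = b"
      thus "z = y" using cr[OF a, of z y] y by auto
    qed
  qed
  thus "ward_quasigroup Q m" unfolding ward_quasigroup_def using h by simp
qed

end
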